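(* Let $\ell \geq 2$ and let $\mathcal G \subset \binom{[2\ell]}{\ell}$ be a non-empty non-trivial family. For $r \ge 1$ let $t_r$ be the number of sets $T \in \binom{[2\ell]}{r}$ such that $T \cap G \neq \emptyset$ for all $G \in \mathcal G$. Then for every $2 \leq r < \ell$, $$t_r \leq \binom{2\ell}{r} - 2\binom{\ell}{r}.$$
   Context: A non-empty family is non-trivial if the intersection of all its members is empty. *)

theory Defs
  imports Main
begin

definition t_count :: "nat \<Rightarrow> nat set set \<Rightarrow> nat \<Rightarrow> nat" where
  "t_count l \<G> r = card {T. T \<subseteq> {1..2*l} \<and> card T = r \<and> (\<forall>G\<in>\<G>. T \<inter> G \<noteq> {})}"

end

theory Submission
  imports Defs
begin

definition DD :: "nat set \<Rightarrow> nat \<Rightarrow> nat set \<Rightarrow> nat \<Rightarrow> nat set set" where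
  "DD G1 r A x = {T. T \<subseteq> A \<and> card T = r \<and> x \<in> T \<and> (\<forall>y\<in>T. y \<in> G1 \<longrightarrow> x \<le> y)}"

lemma DD_card:
  assumes "finite A" "x \<in> A" "r \<ge> 1"
  shows "card (DD G1 r A x) = card (A - insert x {y\<in>G1. y < x}) choose (r - 1)"
proof -
  let ?E = "A - insert x {y\<in>G1. y < x}"
  let ?U = "{U. U \<subseteq> ?E \<and> card U = r - 1}"
  have eq: "DD G1 r A x = insert x ` ?U"
  proof
    show "DD G1 r A x \<subseteq> insert x ` ?U"
    proof
      fix T assume T: "T \<in> DD G1 r A x"
      hence "T - {x} \<in> ?U" using assms unfolding DD_def
        by (auto simp: finite_subset)
      moreover have "T = insert x (T - {x})" using T unfolding DD_def by auto
      ultimately show "T \<in> insert x ` ?U" by blast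
    qed
  next
    show "insert x ` ?U \<subseteq> DD G1 r A x"
    proof
      fix T assume "T \<in> insert x ` ?U"
      then obtain U where U: "U \<subseteq> ?E" "card U = r - 1" "T = insert x U" by blast
      have "finite U" using finite_subset[OF U(1)] assms(1) by simp
      moreover have "x \<notin> U" using U(1) by auto
      ultimately have "card T = r" using U assms(3) by simp
      moreover have "T \<subseteq> A" using U assms(2) by auto
      moreover have "\<forall>y\<in>T. y \<in> G1 \<longrightarrow> x \<le> y" using U(1,3) by auto
      ultimately show "T \<in> DD G1 r A x" using U(3) unfolding DD_def by blast
    qed
  qed
  have "inj_on (insert x) ?U" by (rule inj_onI) auto
  hence "card (DD G1 r A x) = card ?U" unfolding eq by (rule card_image)
  also have "\<dots> = card ?E choose (r - 1)" using assms(1) by (simp add: n_subsets)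
  finally show ?thesis .
qed

theorem lemma4p4:
  fixes l r :: nat and \<G> :: "nat set set"
  assumes "l \<ge> 2"
    and "\<forall>G\<in>\<G>. G \<subseteq> {1..2*l} \<and> card G = l"
    and "\<G> \<noteq> {}"
    and "\<Inter>\<G> = {}"
    and "2 \<le> r" and "r < l"
  shows "int (t_count l \<G> r) \<le> int ((2*l) choose r) - 2 * int (l choose r)"
proof -
  define W where "W = {1..2*l}"
  have fW: "finite W" and cW: "card W = 2*l" by (auto simp: W_def)
  define TR where "TR = {T. T \<subseteq> W \<and> card T = r \<and> (\<forall>G\<in>\<G>. T \<inter> G \<noteq> {})}"
  define NT where "NT = {T. T \<subseteq> W \<and> card T = r \<and> \<not>(\<forall>G\<in>\<G>. T \<inter> G \<noteq> {})}"
  have split: "{T. T \<subseteq> W \<and> card T = r} = TR \<union> NT" "TR \<inter> NT = {}"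
    unfolding TR_def NT_def by auto
  have finAll: "finite {T. T \<subseteq> W \<and> card T = r}" using fW by auto
  have finTR: "finite TR" and finNT: "finite NT" using finAll split(1) by (metis finite_Un)+
  have "card TR + card NT = card (TR \<union> NT)" using card_Un_disjoint[OF finTR finNT split(2)] by simp
  also have "\<dots> = (2*l) choose r" unfolding split(1)[symmetric] n_subsets[OF fW] cW ..
  finally have sumTN: "card TR + card NT = (2*l) choose r" .
  have tc: "t_count l \<G> r = card TR" unfolding t_count_def TR_def W_def by simp
  obtain G1 where G1: "G1 \<in> \<G>" using assms(3) by blast
  have G1W: "G1 \<subseteq> W" "card G1 = l" using assms(2) G1 W_def by auto
  have fG1: "finite G1" using G1W fW finite_subset by blast
  define C where "C x = W - (SOME G. G \<in> \<G> \<and> x \<notin> G)" for x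
  have Cx: "x \<in> C x \<and> card (C x) = l \<and> (\<exists>G\<in>\<G>. C x = W - G)" if "x \<in> G1" for x
  proof -
    have "\<exists>G. G \<in> \<G> \<and> x \<notin> G" using assms(4) by auto
    hence S: "(SOME G. G \<in> \<G> \<and> x \<notin> G) \<in> \<G> \<and> x \<notin> (SOME G. G \<in> \<G> \<and> x \<notin> G)"
      by (rule someI_ex)
    have sub: "(SOME G. G \<in> \<G> \<and> x \<notin> G) \<subseteq> W" "card (SOME G. G \<in> \<G> \<and> x \<notin> G) = l"
      using S assms(2) W_def by auto
    have "card (C x) = card W - l" unfolding C_def using card_Diff_subset[OF finite_subset[OF sub(1) fW] sub(1)] sub(2) by simp
    thus ?thesis using S that G1W cW unfolding C_def by auto
  qed
  define C1 where "C1 = W - G1"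
  have cC1: "card C1 = l" unfolding C1_def using G1W cW fW by (simp add: card_Diff_subset fG1)
  define P1 where "P1 = {T. T \<subseteq> C1 \<and> card T = r}"
  have cP1: "card P1 = l choose r" unfolding P1_def using n_subsets[of C1 r] cC1 fW C1_def by simp
  define Q where "Q = (\<Union>x\<in>G1. DD G1 r (C x) x)"
  have finDD: "finite (DD G1 r A x)" if "finite A" for A x
  proof -
    have "DD G1 r A x \<subseteq> Pow A" unfolding DD_def by auto
    thus ?thesis using that by (meson finite_Pow_iff finite_subset)
  qed
  have fC: "finite (C x)" for x unfolding C_def using fW by simp
  have cQ: "card Q = (\<Sum>x\<in>G1. card (DD G1 r (C x) x))"
    unfolding Q_def by (rule card_UN_disjoint) (auto simp: fG1 finDD fC DD_def, meson le_antisym)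
  have cG: "card {S. S \<subseteq> G1 \<and> card S = r} = (\<Sum>x\<in>G1. card (DD G1 r G1 x))"
  proof -
    have "{S. S \<subseteq> G1 \<and> card S = r} = (\<Union>x\<in>G1. DD G1 r G1 x)"
    proof
      show "{S. S \<subseteq> G1 \<and> card S = r} \<subseteq> (\<Union>x\<in>G1. DD G1 r G1 x)"
      proof
        fix S assume S: "S \<in> {S. S \<subseteq> G1 \<and> card S = r}"
        hence ne: "S \<noteq> {}" "finite S" using assms(5) finite_subset[OF _ fG1] by auto
        have m: "Min S \<in> S" using Min_in ne by blast
        have "\<forall>y\<in>S. y \<in> G1 \<longrightarrow> Min S \<le> y" using ne by simp
        hence "S \<in> DD G1 r G1 (Min S)" using S m unfolding DD_def by blast
        thus "S \<in> (\<Union>x\<in>G1. DD G1 r G1 x)" using S m by blast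
      qed
    qed (auto simp: DD_def)
    moreover have "card (\<Union>x\<in>G1. DD G1 r G1 x) = (\<Sum>x\<in>G1. card (DD G1 r G1 x))"
      by (rule card_UN_disjoint) (auto simp: fG1 finDD DD_def, meson le_antisym)
    ultimately show ?thesis by simp
  qed
  have "card Q \<ge> (\<Sum>x\<in>G1. card (DD G1 r G1 x))"
    unfolding cQ
  proof (rule sum_mono)
    fix x assume x: "x \<in> G1"
    let ?L = "insert x {y\<in>G1. y < x}"
    have Lsub: "?L \<subseteq> G1" using x by auto
    have fL: "finite ?L" using fG1 by auto
    have "card (G1 - ?L) = l - card ?L" using Lsub fG1 G1W by (simp add: card_Diff_subset fL)
    moreover have "card (C x - ?L) \<ge> card (C x) - card ?L" by (rule diff_card_le_card_Diff[OF fL])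
    ultimately have le: "card (G1 - ?L) \<le> card (C x - ?L)" using Cx[OF x] by simp
    show "card (DD G1 r G1 x) \<le> card (DD G1 r (C x) x)"
    proof -
      have r1: "r \<ge> 1" using assms(5) by simp
      have "card (DD G1 r G1 x) = card (G1 - ?L) choose (r - 1)"
        using DD_card[OF fG1 x r1, of G1] .
      also have "\<dots> \<le> card (C x - ?L) choose (r - 1)" by (rule binomial_right_mono[OF le])
      also have "\<dots> = card (DD G1 r (C x) x)"
        using DD_card[OF fC _ r1, of x x G1] Cx[OF x] by simp
      finally show ?thesis .
    qed
  qed
  hence Qge: "card Q \<ge> l choose r" using cG n_subsets[OF fG1, of r] G1W by simp
  have sub: "P1 \<union> Q \<subseteq> NT"
  proof
    fix T assume "T \<in> P1 \<union> Q"
    thus "T \<in> NT"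
    proof
      assume "T \<in> P1" thus ?thesis using G1 unfolding P1_def NT_def C1_def by auto
    next
      assume "T \<in> Q"
      then obtain x where x: "x \<in> G1" "T \<in> DD G1 r (C x) x" unfolding Q_def by blast
      obtain G where G: "G \<in> \<G>" "C x = W - G" using Cx[OF x(1)] by blast
      show ?thesis using x(2) G unfolding DD_def NT_def by auto
    qed
  qed
  have disj: "P1 \<inter> Q = {}" unfolding P1_def Q_def DD_def C1_def by auto
  have fP: "finite P1" "finite Q" using finite_subset[OF _ finNT] sub by auto
  have "card P1 + card Q \<le> card NT"
    using card_Un_disjoint[OF fP disj] card_mono[OF finNT sub] by simp
  thus ?thesis using sumTN tc cP1 Qge by linarith
qed

end
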